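(* Consider the two-species chemostat $$\dot s=-\mu_1(s)b_1-\mu_2(s)b_2+D(s_\mathrm{in}-s),\qquad \dot b_i=\mu_i(s)b_i-Db_i\quad(i=1,2),$$ with $s_\mathrm{in}>0$ and continuously differentiable growth functions $\mu_1,\mu_2:[0,s_\mathrm{in}]\to[0,\infty)$. Fix $\bar s\in(0,s_\mathrm{in})$ with $\mu_1(\bar s)<\mu_2(\bar s)$, and constants $0<D_{\min}<\mu_2(\bar s)<D_{\max}$. Use the dynamic feedback $$D=\operatorname{sat}_{[D_{\min},D_{\max}]}\big(\bar D-G_1(s-\bar s)\big),\qquad \frac{d}{dt}\bar D=-G_2(s-\bar s)(\bar D-D_{\min})(D_{\max}-\bar D).$$ Then for any constants $G_1>0$, $G_2>0$ with $G_1>-\mu_2'(\bar s)$, the equilibrium $(s,b_1,b_2,\bar D)=(\bar s,0,s_\mathrm{in}-\bar s,\mu_2(\bar s))$ of the closed-loop system is locally exponentially stable, and for solutions starting sufficiently close to it, $\lim_{t\to\infty}\bar D(t)=\mu_2(\bar s)$.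
   Context: The saturation function is $\operatorname{sat}_{[D_{\min},D_{\max}]}(x)=D_{\max}$ if $x>D_{\max}$, $=x$ if $x\in[D_{\min},D_{\max}]$, $=D_{\min}$ if $x<D_{\min}$. *)

theory Defs
  imports "HOL-Analysis.Analysis"
begin

type_synonym state = "real \<times> real \<times> real \<times> real"  (* (s, b1, b2, Dbar) *)

definition sat :: "real \<Rightarrow> real \<Rightarrow> real \<Rightarrow> real" where
  "sat a b x = (if x > b then b else if x < a then a else x)"

definition chemostat_cl ::
  "(real \<Rightarrow> real) \<Rightarrow> (real \<Rightarrow> real) \<Rightarrow> real \<Rightarrow> real \<Rightarrow> real \<Rightarrow> real \<Rightarrow> real \<Rightarrow> real
   \<Rightarrow> state \<Rightarrow> state" where
  "chemostat_cl mu1 mu2 s_in sbar Dmin Dmax G1 G2 x =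
     (case x of (s, b1, b2, Dh) \<Rightarrow>
       let D = sat Dmin Dmax (Dh - G1 * (s - sbar)) in
       (- mu1 s * b1 - mu2 s * b2 + D * (s_in - s),
        mu1 s * b1 - D * b1,
        mu2 s * b2 - D * b2,
        - G2 * (s - sbar) * (Dh - Dmin) * (Dmax - Dh)))"

definition ode_solution :: "(state \<Rightarrow> state) \<Rightarrow> (real \<Rightarrow> state) \<Rightarrow> bool" where
  "ode_solution f x \<longleftrightarrow> (\<forall>t\<ge>0. (x has_vector_derivative f (x t)) (at t within {0..}))"

definition locally_exp_stable :: "(state \<Rightarrow> state) \<Rightarrow> state \<Rightarrow> bool" where
  "locally_exp_stable f xe \<longleftrightarrow>
     (\<exists>\<delta>>0. \<exists>K>0. \<exists>r>0. \<forall>x. ode_solution f x \<and> norm (x 0 - xe) < \<delta> \<longrightarrow>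
        (\<forall>t\<ge>0. norm (x t - xe) \<le> K * exp (- r * t) * norm (x 0 - xe)))"

end

theory Submission
  imports Defs
begin

lemma young: fixes t x y :: real assumes "t > 0" shows "x*y \<le> t*x^2 + y^2/(4*t)"
proof -
  have "0 \<le> (2*t*x - y)^2" by simp
  hence "4*t*(x*y) \<le> 4*t*(t*x^2 + y^2/(4*t))" using assms
    by (simp add: power2_eq_square algebra_simps)
  thus ?thesis using assms by simp
qed

lemma main_lin:
  fixes C0 B0 k0 eps q0 u w p :: real
  assumes pos: "C0>0" "B0>0" "k0>0" "eps>0"
  and eps1: "eps*k0 \<le> C0" and eps2: "2*eps \<le> B0*k0"
  and q0: "q0 = min (C0*B0*k0) (eps*B0/2)"
  shows "2*C0*u*(B0*(k0*(p-u) - w)) + 2*B0*w*(-C0*(p-u)) + eps*(B0*(k0*(p-u) - w)*w + u*(-C0*(p-u)))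
     \<le> -(3*q0/4)*(u^2+w^2) + (2*((2*C0*B0*k0 - eps*C0)^2 + (eps*B0*k0 - 2*B0*C0)^2)/q0)*p^2"
proof -
  define al where "al = 2*C0*B0*k0 - eps*C0"
  define be where "be = eps*B0*k0 - 2*B0*C0"
  have q0pos: "q0 > 0" using q0 pos by simp
  have id: "2*C0*u*(B0*(k0*(p-u) - w)) + 2*B0*w*(-C0*(p-u)) + eps*(B0*(k0*(p-u) - w)*w + u*(-C0*(p-u)))
     = -2*(C0*B0*k0*u^2) + eps*C0*u^2 - eps*B0*w^2 - eps*B0*k0*u*w + u*(al*p) + w*(be*p)"
    unfolding al_def be_def by (simp add: power2_eq_square algebra_simps)
  have h1: "- (k0*u*w) \<le> (w^2 + k0^2*u^2)/2"
  proof -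
    have "0 \<le> (w + k0*u)^2" by simp
    thus ?thesis by (simp add: power2_eq_square algebra_simps)
  qed
  have h1': "- (eps*B0*k0*u*w) \<le> eps*B0*w^2/2 + eps*B0*k0^2*u^2/2"
    using mult_left_mono[OF h1, of "eps*B0"] pos by (simp add: algebra_simps)
  have h2: "eps*B0*k0^2*u^2/2 \<le> C0*B0*k0*u^2/2"
  proof -
    have "eps*k0*(B0*k0*u^2) \<le> C0*(B0*k0*u^2)"
      by (rule mult_right_mono[OF eps1]) (use pos in simp)
    thus ?thesis by (simp add: power2_eq_square algebra_simps)
  qed
  have h3: "eps*C0*u^2 \<le> C0*B0*k0*u^2/2"
  proof -
    have "2*eps*(C0*u^2) \<le> B0*k0*(C0*u^2)"
      by (rule mult_right_mono[OF eps2]) (use pos in simp)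
    thus ?thesis by (simp add: algebra_simps)
  qed
  have y1: "u*(al*p) \<le> (q0/8)*u^2 + (al*p)^2/(4*(q0/8))" by (rule young) (use q0pos in simp)
  have y2: "w*(be*p) \<le> (q0/8)*w^2 + (be*p)^2/(4*(q0/8))" by (rule young) (use q0pos in simp)
  have q1: "q0 \<le> C0*B0*k0" "q0 \<le> eps*B0/2" using q0 by auto
  have q1u: "q0*u^2 \<le> C0*B0*k0*u^2" using mult_right_mono[OF q1(1), of "u^2"] by simp
  have q1w: "q0*w^2 \<le> eps*B0*w^2/2" using mult_right_mono[OF q1(2), of "w^2"] by simp
  have e: "(al*p)^2/(4*(q0/8)) + (be*p)^2/(4*(q0/8)) = (2*(al^2+be^2)/q0)*p^2"
    using q0pos by (simp add: field_simps power2_eq_square)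
  have y1': "u*(al*p) \<le> q0*u^2/8 + (al*p)^2/(4*(q0/8))" using y1 by simp
  have y2': "w*(be*p) \<le> q0*w^2/8 + (be*p)^2/(4*(q0/8))" using y2 by simp
  have rhs: "-(3*q0/4)*(u^2+w^2) + (2*(al^2+be^2)/q0)*p^2 = -(3/4)*(q0*u^2) - (3/4)*(q0*w^2) + ((al*p)^2/(4*(q0/8)) + (be*p)^2/(4*(q0/8)))"
    unfolding e by (simp add: algebra_simps)
  have qu: "0 \<le> q0*u^2" using q0pos by simp
  have qw: "0 \<le> q0*w^2" using q0pos by simp
  have "-2*(C0*B0*k0*u^2) + eps*C0*u^2 - eps*B0*w^2 - eps*B0*k0*u*w + u*(al*p) + w*(be*p)
     \<le> -(3/4)*(q0*u^2) - (3/4)*(q0*w^2) + ((al*p)^2/(4*(q0/8)) + (be*p)^2/(4*(q0/8)))"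
    using h1' h2 h3 y1' y2' q1u q1w qu qw by linarith
  hence "2*C0*u*(B0*(k0*(p-u) - w)) + 2*B0*w*(-C0*(p-u)) + eps*(B0*(k0*(p-u) - w)*w + u*(-C0*(p-u)))
     \<le> -(3*q0/4)*(u^2+w^2) + (2*(al^2+be^2)/q0)*p^2" using id rhs by linarith
  thus ?thesis by (simp only: al_def be_def)
qed


lemma absprod: fixes x y :: real shows "\<bar>x\<bar>*\<bar>y\<bar> \<le> x^2 + y^2"
proof -
  have "0 \<le> (\<bar>x\<bar> - \<bar>y\<bar>)^2" by simp
  also have "\<dots> = x^2 - 2*\<bar>x\<bar>*\<bar>y\<bar> + y^2" by (simp add: power2_diff)
  finally show ?thesis using abs_ge_zero[of x] abs_ge_zero[of y] mult_nonneg_nonneg[of "\<bar>x\<bar>" "\<bar>y\<bar>"] by linarith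
qed

lemma err_bound:
  fixes C0 B0 k0 G2 eps eta rho kap ds u w Rr dc :: real
  assumes pos: "C0 \<ge> 0" "B0 \<ge> 0" "k0 \<ge> 0" "G2 \<ge> 0" "eps \<ge> 0" "eta \<ge> 0" "kap \<ge> 0"
  and R: "\<bar>Rr\<bar> \<le> eta*\<bar>ds\<bar>" and dc: "\<bar>dc\<bar> \<le> kap*rho"
  and b: "\<bar>ds\<bar> \<le> rho" "\<bar>u\<bar> \<le> rho" "\<bar>w\<bar> \<le> rho" "eta \<le> 1"
  shows "\<bar>2*C0*u*(B0*Rr + u*(k0*ds + Rr - w)) - 2*B0*G2*dc*w*ds
          + eps*((B0*Rr + u*(k0*ds + Rr - w))*w - G2*dc*ds*u)\<bar>
    \<le> (eta*(2*C0*B0 + eps*B0) + rho*((k0+2)*(2*C0+eps) + 2*B0*G2*kap + eps*G2*kap)) * (ds^2+u^2+w^2)"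
proof -
  define S where "S = ds^2+u^2+w^2"
  define E where "E = k0*ds + Rr - w"
  have rho0: "rho \<ge> 0" using b(1) by linarith
  have S0: "S \<ge> 0" unfolding S_def by simp
  have us: "\<bar>u\<bar>*\<bar>ds\<bar> \<le> S" using absprod[of u ds] zero_le_power2[of w] unfolding S_def by linarith
  have ws: "\<bar>w\<bar>*\<bar>ds\<bar> \<le> S" using absprod[of w ds] zero_le_power2[of u] unfolding S_def by linarith
  have uw: "\<bar>u\<bar>*\<bar>w\<bar> \<le> S" using absprod[of u w] zero_le_power2[of ds] unfolding S_def by linarith
  have uu0: "\<bar>u\<bar>*\<bar>u\<bar> = u^2" by (simp add: power2_eq_square)
  have uu: "\<bar>u\<bar>*\<bar>u\<bar> \<le> S" unfolding S_def uu0 using zero_le_power2[of ds] zero_le_power2[of w] by linarith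
  have E: "\<bar>E\<bar> \<le> (k0+2)*rho"
  proof -
    have "\<bar>E\<bar> \<le> k0*\<bar>ds\<bar> + \<bar>Rr\<bar> + \<bar>w\<bar>"
    proof -
      have "\<bar>k0*ds\<bar> = k0*\<bar>ds\<bar>" using pos by (simp add: abs_mult)
      moreover have "\<bar>k0*ds + Rr - w\<bar> \<le> \<bar>k0*ds\<bar> + \<bar>Rr\<bar> + \<bar>w\<bar>" by arith
      ultimately show ?thesis unfolding E_def by simp
    qed
    also have "\<dots> \<le> k0*rho + rho + rho"
    proof -
      have "k0*\<bar>ds\<bar> \<le> k0*rho" using b pos by (simp add: mult_left_mono)
      moreover have "eta*\<bar>ds\<bar> \<le> 1*rho" using b pos using S0 rho0 pos by (intro mult_mono) auto
      ultimately show ?thesis using R b by linarith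
    qed
    finally show ?thesis by (simp add: algebra_simps)
  qed
  have X1: "\<bar>u*Rr\<bar> \<le> eta*S"
  proof -
    have "\<bar>u*Rr\<bar> \<le> \<bar>u\<bar>*(eta*\<bar>ds\<bar>)" unfolding abs_mult by (rule mult_left_mono[OF R]) simp
    also have "\<dots> = eta*(\<bar>u\<bar>*\<bar>ds\<bar>)" by simp
    also have "\<dots> \<le> eta*S" using us pos by (simp add: mult_left_mono)
    finally show ?thesis .
  qed
  have X4: "\<bar>Rr*w\<bar> \<le> eta*S"
  proof -
    have "\<bar>Rr*w\<bar> = \<bar>w\<bar>*\<bar>Rr\<bar>" by (simp add: abs_mult)
    also have "\<dots> \<le> \<bar>w\<bar>*(eta*\<bar>ds\<bar>)" by (rule mult_left_mono[OF R]) simp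
    also have "\<dots> = eta*(\<bar>w\<bar>*\<bar>ds\<bar>)" by simp
    also have "\<dots> \<le> eta*S" using ws pos by (simp add: mult_left_mono)
    finally show ?thesis .
  qed
  have X2: "\<bar>u*u*E\<bar> \<le> (k0+2)*rho*S"
  proof -
    have "\<bar>u*u*E\<bar> = (\<bar>u\<bar>*\<bar>u\<bar>)*\<bar>E\<bar>" by (simp add: abs_mult)
    also have "\<dots> \<le> S*((k0+2)*rho)" using uu E using S0 rho0 pos by (intro mult_mono) auto
    finally show ?thesis by (simp add: algebra_simps)
  qed
  have X5: "\<bar>u*E*w\<bar> \<le> (k0+2)*rho*S"
  proof -
    have "\<bar>u*E*w\<bar> = (\<bar>u\<bar>*\<bar>w\<bar>)*\<bar>E\<bar>" by (simp add: abs_mult)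
    also have "\<dots> \<le> S*((k0+2)*rho)" using uw E using S0 rho0 pos by (intro mult_mono) auto
    finally show ?thesis by (simp add: algebra_simps)
  qed
  have X3: "\<bar>dc*w*ds\<bar> \<le> kap*rho*S"
  proof -
    have "\<bar>dc*w*ds\<bar> = \<bar>dc\<bar>*(\<bar>w\<bar>*\<bar>ds\<bar>)" by (simp add: abs_mult)
    also have "\<dots> \<le> (kap*rho)*S" using ws dc using S0 rho0 pos by (intro mult_mono) auto
    finally show ?thesis .
  qed
  have X6: "\<bar>dc*ds*u\<bar> \<le> kap*rho*S"
  proof -
    have "\<bar>dc*ds*u\<bar> = \<bar>dc\<bar>*(\<bar>u\<bar>*\<bar>ds\<bar>)" by (simp add: abs_mult)
    also have "\<dots> \<le> (kap*rho)*S" using us dc using S0 rho0 pos by (intro mult_mono) auto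
    finally show ?thesis .
  qed
  have id: "2*C0*u*(B0*Rr + u*(k0*ds + Rr - w)) - 2*B0*G2*dc*w*ds
          + eps*((B0*Rr + u*(k0*ds + Rr - w))*w - G2*dc*ds*u)
    = (2*C0*B0)*(u*Rr) + (2*C0)*(u*u*E) - (2*B0*G2)*(dc*w*ds) + (eps*B0)*(Rr*w) + eps*(u*E*w) - (eps*G2)*(dc*ds*u)"
    unfolding E_def by (simp add: algebra_simps)
  have tri: "\<bar>(2*C0*B0)*(u*Rr) + (2*C0)*(u*u*E) - (2*B0*G2)*(dc*w*ds) + (eps*B0)*(Rr*w) + eps*(u*E*w) - (eps*G2)*(dc*ds*u)\<bar>
     \<le> (2*C0*B0)*\<bar>u*Rr\<bar> + (2*C0)*\<bar>u*u*E\<bar> + (2*B0*G2)*\<bar>dc*w*ds\<bar> + (eps*B0)*\<bar>Rr*w\<bar> + eps*\<bar>u*E*w\<bar> + (eps*G2)*\<bar>dc*ds*u\<bar>"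
  proof -
    have a: "\<And>c X. c \<ge> 0 \<Longrightarrow> \<bar>c*X\<bar> = c*\<bar>X::real\<bar>" by (simp add: abs_mult)
    have t: "\<And>a b c d e f::real. \<bar>a+b-c+d+e-f\<bar> \<le> \<bar>a\<bar>+\<bar>b\<bar>+\<bar>c\<bar>+\<bar>d\<bar>+\<bar>e\<bar>+\<bar>f\<bar>" by arith
    show ?thesis using t[of "(2*C0*B0)*(u*Rr)" "(2*C0)*(u*u*E)" "(2*B0*G2)*(dc*w*ds)" "(eps*B0)*(Rr*w)" "eps*(u*E*w)" "(eps*G2)*(dc*ds*u)"]
      unfolding a[of "2*C0*B0"] using pos by (simp add: abs_mult)
  qed
  have m1: "(2*C0*B0)*\<bar>u*Rr\<bar> \<le> (2*C0*B0)*(eta*S)" using X1 pos by (intro mult_left_mono) auto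
  have m2: "(2*C0)*\<bar>u*u*E\<bar> \<le> (2*C0)*((k0+2)*rho*S)" using X2 pos by (intro mult_left_mono) auto
  have m3: "(2*B0*G2)*\<bar>dc*w*ds\<bar> \<le> (2*B0*G2)*(kap*rho*S)" using X3 pos by (intro mult_left_mono) auto
  have m4: "(eps*B0)*\<bar>Rr*w\<bar> \<le> (eps*B0)*(eta*S)" using X4 pos by (intro mult_left_mono) auto
  have m5: "eps*\<bar>u*E*w\<bar> \<le> eps*((k0+2)*rho*S)" using X5 pos by (intro mult_left_mono) auto
  have m6: "(eps*G2)*\<bar>dc*ds*u\<bar> \<le> (eps*G2)*(kap*rho*S)" using X6 pos by (intro mult_left_mono) auto
  have fin: "(2*C0*B0)*(eta*S) + (2*C0)*((k0+2)*rho*S) + (2*B0*G2)*(kap*rho*S) + (eps*B0)*(eta*S) + eps*((k0+2)*rho*S) + (eps*G2)*(kap*rho*S)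
     = (eta*(2*C0*B0 + eps*B0) + rho*((k0+2)*(2*C0+eps) + 2*B0*G2*kap + eps*G2*kap)) * S"
    by (simp add: algebra_simps)
  show ?thesis unfolding id S_def[symmetric] using tri m1 m2 m3 m4 m5 m6 fin by linarith
qed


lemma core:
  fixes C0 B0 k0 G2 eps eta rho kap q0 L d ds b1 u w z Rr dc Dv m1 du dw dz db1 :: real
  assumes pos: "C0>0" "B0>0" "k0>0" "G2>0" "eps>0" "eta\<ge>0" "kap\<ge>0" "d>0"
  and eps1: "eps*k0 \<le> C0" and eps2: "2*eps \<le> B0*k0"
  and q0: "q0 = min (C0*B0*k0) (eps*B0/2)"
  and L: "2*L*d = 4*((2*C0*B0*k0 - eps*C0)^2 + (eps*B0*k0 - 2*B0*C0)^2)/q0 + 2"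
  and z: "z = ds + b1 + u"
  and R: "\<bar>Rr\<bar> \<le> eta*\<bar>ds\<bar>" and dc: "\<bar>dc\<bar> \<le> kap*rho"
  and b: "\<bar>ds\<bar> \<le> rho" "\<bar>u\<bar> \<le> rho" "\<bar>w\<bar> \<le> rho" "eta \<le> 1"
  and Lam1: "eta*(2*C0*B0 + eps*B0) + rho*((k0+2)*(2*C0+eps) + 2*B0*G2*kap + eps*G2*kap) \<le> q0/32"
  and Lam2: "eta*(2*C0*B0 + eps*B0) + rho*((k0+2)*(2*C0+eps) + 2*B0*G2*kap + eps*G2*kap) \<le> 1/3"
  and Dv: "d \<le> Dv" and m1: "m1 - Dv \<le> -d"
  and du: "du = (k0*ds + Rr - w)*(B0+u)" and dw: "dw = -(C0 + G2*dc)*ds"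
  and dz: "dz = -Dv*z" and db1: "db1 = (m1 - Dv)*b1"
  shows "2*C0*u*du + 2*B0*w*dw + eps*(du*w + u*dw) + L*(2*z*dz + 2*b1*db1) \<le> -(q0/2)*(u^2+w^2) - (z^2+b1^2)"
proof -
  define Lam where "Lam = eta*(2*C0*B0 + eps*B0) + rho*((k0+2)*(2*C0+eps) + 2*B0*G2*kap + eps*G2*kap)"
  define cpp where "cpp = 2*((2*C0*B0*k0 - eps*C0)^2 + (eps*B0*k0 - 2*B0*C0)^2)/q0"
  define P where "P = z^2 + b1^2"
  define Q where "Q = u^2 + w^2"
  define S where "S = ds^2 + u^2 + w^2"
  have q0pos: "q0 > 0" using q0 pos by simp
  have rho0: "rho \<ge> 0" using b(1) by linarith
  have Lam0: "Lam \<ge> 0" unfolding Lam_def using pos rho0 by simp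
  have P0: "P \<ge> 0" "Q \<ge> 0" unfolding P_def Q_def by simp_all
  have L2: "2*L*d = 2*cpp + 2" unfolding L cpp_def by (simp add: field_simps)
  have cpp0: "cpp \<ge> 0" unfolding cpp_def using q0pos by simp
  have hds: "z - b1 - u = ds" using z by simp
  have M: "2*C0*u*(B0*(k0*ds - w)) + 2*B0*w*(-C0*ds) + eps*(B0*(k0*ds - w)*w + u*(-C0*ds))
     \<le> -(3*q0/4)*(u^2+w^2) + cpp*(z-b1)^2"
    using main_lin[OF pos(1,2,3,5) eps1 eps2 q0, where u=u and w=w and p="z-b1"] unfolding cpp_def hds by simp
  have Er: "\<bar>2*C0*u*(B0*Rr + u*(k0*ds + Rr - w)) - 2*B0*G2*dc*w*ds
          + eps*((B0*Rr + u*(k0*ds + Rr - w))*w - G2*dc*ds*u)\<bar> \<le> Lam * S"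
    unfolding Lam_def S_def
    by (rule err_bound) (use pos R dc b in auto)
  have id: "2*C0*u*du + 2*B0*w*dw + eps*(du*w + u*dw)
     = (2*C0*u*(B0*(k0*ds - w)) + 2*B0*w*(-C0*ds) + eps*(B0*(k0*ds - w)*w + u*(-C0*ds)))
     + (2*C0*u*(B0*Rr + u*(k0*ds + Rr - w)) - 2*B0*G2*dc*w*ds
          + eps*((B0*Rr + u*(k0*ds + Rr - w))*w - G2*dc*ds*u))"
    unfolding du dw by (simp add: algebra_simps)
  have Lt: "L*(2*z*dz + 2*b1*db1) \<le> -(2*L*d)*P"
  proof -
    have "L = (cpp+1)/d" using L2 pos by (simp add: field_simps)
    hence L0: "L \<ge> 0" using cpp0 pos by simp
    have "L*(2*z*dz + 2*b1*db1) = -2*L*(Dv*z^2) + 2*L*((m1-Dv)*b1^2)"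
      unfolding dz db1 by (simp add: power2_eq_square algebra_simps)
    also have "\<dots> \<le> -2*L*(d*z^2) + 2*L*((-d)*b1^2)"
    proof -
      have "d*z^2 \<le> Dv*z^2" using Dv by (simp add: mult_right_mono)
      hence a: "2*L*(d*z^2) \<le> 2*L*(Dv*z^2)" using L0 by (simp add: mult_left_mono)
      have "(m1-Dv)*b1^2 \<le> (-d)*b1^2" using mult_right_mono[OF m1, of "b1^2"] by simp
      hence "2*L*((m1-Dv)*b1^2) \<le> 2*L*((-d)*b1^2)" using L0 by (intro mult_left_mono) auto
      thus ?thesis using a by linarith
    qed
    also have "\<dots> = -(2*L*d)*P" unfolding P_def by (simp add: algebra_simps)
    finally show ?thesis .
  qed
  have p2: "(z-b1)^2 \<le> 2*P"
  proof -
    have "0 \<le> (z+b1)^2" by simp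
    thus ?thesis unfolding P_def by (simp add: power2_eq_square algebra_simps)
  qed
  have cp: "cpp*(z-b1)^2 \<le> cpp*(2*P)" using p2 cpp0 by (simp add: mult_left_mono)
  have S3: "S \<le> 3*P + 4*Q"
  proof -
    have "ds^2 \<le> 3*(z^2 + b1^2 + u^2)"
    proof -
      have "0 \<le> (z+b1)^2 + (z+u)^2 + (b1-u)^2" by simp
      thus ?thesis unfolding hds[symmetric] by (simp add: power2_eq_square algebra_simps)
    qed
    thus ?thesis unfolding S_def P_def Q_def distrib_left using zero_le_power2[of w] zero_le_power2[of u] by linarith
  qed
  have LS: "Lam*S \<le> Lam*(3*P) + Lam*(4*Q)" using mult_left_mono[OF S3 Lam0] by (simp add: algebra_simps)
  have LP: "Lam*(3*P) \<le> P" using mult_right_mono[OF Lam2[folded Lam_def], of "3*P"] P0 by simp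
  have LQ: "Lam*(4*Q) \<le> q0/8*Q" using mult_right_mono[OF Lam1[folded Lam_def], of "4*Q"] P0 by (simp add: mult.commute)
  have Er': "(2*C0*u*(B0*Rr + u*(k0*ds + Rr - w)) - 2*B0*G2*dc*w*ds
          + eps*((B0*Rr + u*(k0*ds + Rr - w))*w - G2*dc*ds*u)) \<le> Lam*S" using Er by linarith
  have qq: "q0*Q \<ge> 0" using q0pos P0 by simp
  have fin: "-(3*q0/4)*(u^2+w^2) = -(3/4)*(q0*Q)" "-(q0/2)*(u^2+w^2) = -(1/2)*(q0*Q)" "q0/8*Q = (1/8)*(q0*Q)"
    unfolding Q_def by (simp_all add: algebra_simps)
  have e1: "-(2*L*d)*P = -2*(cpp*P) - 2*P" unfolding L2 by (simp add: algebra_simps)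
  have e2: "cpp*(2*P) = 2*(cpp*P)" by simp
  show ?thesis unfolding id using M Er' Lt cp LS LP LQ qq fin e1 e2 unfolding P_def[symmetric] Q_def[symmetric]
    by linarith
qed


lemma lyap_exp:
  fixes f :: "state \<Rightarrow> state" and xe :: state and W :: "state \<Rightarrow> real" and DW :: "state \<Rightarrow> state \<Rightarrow> real"
  assumes Wd: "\<And>y. (W has_derivative DW y) (at y)"
  and Wlo: "\<And>y. m*(norm(y-xe))^2 \<le> W y" and Whi: "\<And>y. W y \<le> M*(norm(y-xe))^2" and m: "m>0" and M: "M>0"
  and dec: "\<And>y. norm(y-xe) < rho \<Longrightarrow> DW y (f y) \<le> -r1 * W y" and r1: "r1 > 0" and rho: "rho > 0"
  shows "\<exists>\<delta>>0. \<forall>x. ode_solution f x \<and> norm (x 0 - xe) < \<delta> \<longrightarrow>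
     (\<forall>t\<ge>0. norm (x t - xe) \<le> sqrt(M/m) * exp(-(r1/2)*t) * norm (x 0 - xe))"
proof -
  define K where "K = sqrt(M/m)"
  have K: "K > 0" unfolding K_def using m M by simp
  have K2: "K^2 = M/m" unfolding K_def using m M by simp
  show ?thesis
  proof (intro exI[of _ "rho/K"] conjI allI impI)
    show "rho/K > 0" using rho K by simp
    fix x assume asm: "ode_solution f x \<and> norm (x 0 - xe) < rho/K"
    define e0 where "e0 = norm (x 0 - xe)"
    have e0: "e0 \<ge> 0" "K*e0 < rho" using asm K unfolding e0_def by (auto simp: field_simps)
    have sol: "\<And>t. t \<ge> 0 \<Longrightarrow> (x has_vector_derivative f (x t)) (at t within {0..})"
      using asm unfolding ode_solution_def by auto
    define h where "h t = W (x t) * exp(r1*t)" for t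
    have gd: "((\<lambda>t. W (x t)) has_real_derivative DW (x t) (f (x t))) (at t within {0..})" if t: "t \<ge> 0" for t
    proof -
      have "((W \<circ> x) has_vector_derivative DW (x t) (f (x t))) (at t within {0..})"
        by (rule vector_derivative_diff_chain_within[OF sol[OF t]]) (rule has_derivative_at_withinI[OF Wd])
      thus ?thesis unfolding has_real_derivative_iff_has_vector_derivative o_def .
    qed
    have hd: "(h has_real_derivative (DW (x t) (f (x t)) + r1*W (x t))*exp(r1*t)) (at t within {0..})" if t: "t \<ge> 0" for t
      unfolding h_def using gd[OF t]
      by (auto intro!: derivative_eq_intros simp: algebra_simps)
    have hc: "continuous_on {0..} h"
      unfolding continuous_on_eq_continuous_within
      proof
        fix t :: real assume "t \<in> {0..}"
        thus "continuous (at t within {0..}) h" using DERIV_continuous[OF hd[of t]] by simp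
      qed
    have B: "norm (x t - xe) \<le> K*exp(-(r1/2)*t)*e0"
      if t: "t \<ge> 0" and inside: "\<And>\<tau>. 0 < \<tau> \<Longrightarrow> \<tau> < t \<Longrightarrow> norm (x \<tau> - xe) < rho" for t
    proof -
      have "h t \<le> h 0"
      proof (rule DERIV_nonpos_imp_decreasing_open[OF t])
        fix \<tau> assume tau: "0 < \<tau>" "\<tau> < t"
        have "at \<tau> within {0..} = at \<tau>" by (rule at_within_interior) (use tau in simp)
        hence "(h has_real_derivative (DW (x \<tau>) (f (x \<tau>)) + r1*W (x \<tau>))*exp(r1*\<tau>)) (at \<tau>)"
          using hd[of \<tau>] tau by simp
        moreover have "(DW (x \<tau>) (f (x \<tau>)) + r1*W (x \<tau>))*exp(r1*\<tau>) \<le> 0"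
          using dec[OF inside[OF tau]] by (intro mult_nonpos_nonneg) auto
        ultimately show "\<exists>y. (h has_real_derivative y) (at \<tau>) \<and> y \<le> 0" by blast
      next
        show "continuous_on {0..t} h" using hc by (rule continuous_on_subset) auto
      qed
      hence ht: "W (x t) * exp(r1*t) \<le> W (x 0)" unfolding h_def by simp
      have "m*(norm (x t - xe))^2 \<le> W (x t)" by (rule Wlo)
      also have "\<dots> \<le> W (x 0) * exp(-(r1*t))"
        using ht by (simp add: exp_minus field_simps)
      also have "\<dots> \<le> M*e0^2 * exp(-(r1*t))" unfolding e0_def using Whi[of "x 0"] by simp
      finally have "m*(norm (x t - xe))^2 \<le> M*e0^2 * exp(-(r1*t))" .
      hence "(norm (x t - xe))^2 \<le> (M/m)*e0^2 * exp(-(r1*t))" using m by (simp add: field_simps)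
      also have "\<dots> = (K*exp(-(r1/2)*t)*e0)^2"
        unfolding power_mult_distrib K2 by (simp add: exp_add[symmetric] power2_eq_square)
      finally show ?thesis by (rule power2_le_imp_le) (use K e0 in simp)
    qed
    have A: "\<forall>t\<ge>0. norm (x t - xe) < rho"
    proof (rule ccontr)
      assume neg: "\<not> (\<forall>t\<ge>0. norm (x t - xe) < rho)"
      define S where "S = {0..} \<inter> (\<lambda>t. norm (x t - xe)) -` {rho..}"
      have Sne: "S \<noteq> {}" using neg unfolding S_def by (auto simp: not_less)
      have xc: "continuous_on {0..} x"
        unfolding continuous_on_eq_continuous_within
      proof
        fix t :: real assume "t \<in> {0..}"
        thus "continuous (at t within {0..}) x" using has_vector_derivative_continuous[OF sol[of t]] by simp
      qed
      have "continuous_on {0..} (\<lambda>t. norm (x t - xe))"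
        by (intro continuous_intros xc)
      hence Scl: "closed S" unfolding S_def by (intro continuous_closed_preimage) auto
      have Sbdd: "bdd_below S" unfolding S_def by (auto intro: bdd_belowI[of _ 0])
      define T where "T = Inf S"
      have TS: "T \<in> S" unfolding T_def by (rule closed_contains_Inf[OF Sne Sbdd Scl])
      hence T0: "T \<ge> 0" and Tr: "norm (x T - xe) \<ge> rho" unfolding S_def by auto
      have inside: "norm (x \<tau> - xe) < rho" if "0 < \<tau>" "\<tau> < T" for \<tau>
      proof (rule ccontr)
        assume "\<not> ?thesis"
        hence "\<tau> \<in> S" unfolding S_def using that by auto
        hence "T \<le> \<tau>" unfolding T_def by (rule cInf_lower[OF _ Sbdd])
        thus False using that by simp
      qed
      have "norm (x T - xe) \<le> K*exp(-(r1/2)*T)*e0" by (rule B[OF T0 inside])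
      also have "\<dots> \<le> K*1*e0"
        using K e0 T0 r1 by (intro mult_mono) auto
      finally show False using e0 Tr by simp
    qed
    fix t :: real assume t: "0 \<le> t"
    show "norm (x t - xe) \<le> sqrt(M/m) * exp(-(r1/2)*t) * norm (x 0 - xe)"
      using B[OF t] A unfolding K_def e0_def by auto
  qed
qed


lemma deriv_approx:
  fixes f :: "real \<Rightarrow> real"
  assumes "(f has_real_derivative f') (at x)" "\<eta> > 0"
  shows "\<exists>d>0. \<forall>y. \<bar>y - x\<bar> < d \<longrightarrow> \<bar>f y - f x - f'*(y-x)\<bar> \<le> \<eta>*\<bar>y-x\<bar>"
proof -
  have "((\<lambda>y. (f y - f x) / (y - x)) \<longlongrightarrow> f') (at x)"
    using assms(1) has_field_derivative_iff by blast
  hence "eventually (\<lambda>y. dist ((f y - f x) / (y - x)) f' < \<eta>) (at x)"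
    using assms(2) tendstoD by blast
  then obtain d where d: "d > 0" "\<And>y. y \<noteq> x \<Longrightarrow> dist y x < d \<Longrightarrow> dist ((f y - f x) / (y - x)) f' < \<eta>"
    unfolding eventually_at by blast
  show ?thesis
  proof (intro exI[of _ d] conjI allI impI)
    show "d > 0" by fact
    fix y assume y: "\<bar>y - x\<bar> < d"
    show "\<bar>f y - f x - f'*(y-x)\<bar> \<le> \<eta>*\<bar>y-x\<bar>"
    proof (cases "y = x")
      case False
      have "\<bar>(f y - f x) / (y - x) - f'\<bar> < \<eta>" using d(2)[OF False] y by (simp add: dist_real_def)
      moreover have "(f y - f x) / (y - x) - f' = (f y - f x - f'*(y-x)) / (y - x)"
        using False by (simp add: field_simps)
      ultimately have "\<bar>f y - f x - f'*(y-x)\<bar> / \<bar>y - x\<bar> < \<eta>" by (simp add: abs_divide)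
      thus ?thesis using False by (simp add: field_simps)
    qed simp
  qed
qed

lemma norm4: "norm ((a,b,c,d)::state) = sqrt (a^2+b^2+c^2+d^2)"
  by (simp add: norm_Pair)

lemma norm4_comp: "\<bar>a\<bar> \<le> norm ((a,b,c,d)::state)" "\<bar>b\<bar> \<le> norm ((a,b,c,d)::state)"
   "\<bar>c\<bar> \<le> norm ((a,b,c,d)::state)" "\<bar>d\<bar> \<le> norm ((a,b,c,d)::state)"
  unfolding norm4 by (auto intro!: real_le_rsqrt simp: power2_abs)

lemma norm4_sq: "(norm ((a,b,c,d)::state))^2 = a^2+b^2+c^2+d^2"
  unfolding norm4 by simp

lemma W_deriv:
  fixes C0 B0 D0 eps L s_in :: real
  shows "((\<lambda>y::state. C0*(fst(snd(snd y)) - B0)^2 + B0*(snd(snd(snd y)) - D0)^2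
      + eps*((fst(snd(snd y)) - B0)*(snd(snd(snd y)) - D0))
      + L*((fst y + fst(snd y) + fst(snd(snd y)) - s_in)^2 + (fst(snd y))^2))
   has_derivative (\<lambda>h. 2*C0*(fst(snd(snd y)) - B0)*fst(snd(snd h)) + 2*B0*(snd(snd(snd y)) - D0)* snd(snd(snd h))
      + eps*(fst(snd(snd h))*(snd(snd(snd y)) - D0) + (fst(snd(snd y)) - B0)* snd(snd(snd h)))
      + L*(2*(fst y + fst(snd y) + fst(snd(snd y)) - s_in)*(fst h + fst(snd h) + fst(snd(snd h))) + 2*fst(snd y)*fst(snd h)))) (at y)"
  by (auto intro!: derivative_eq_intros ext simp: algebra_simps)



lemma absprod2: fixes x y :: real shows "\<bar>x*y\<bar> \<le> x^2 + y^2"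
proof -
  have "0 \<le> (\<bar>x\<bar> - \<bar>y\<bar>)^2" by simp
  also have "\<dots> = x^2 - 2*\<bar>x\<bar>*\<bar>y\<bar> + y^2" by (simp add: power2_diff)
  finally have "\<bar>x\<bar>*\<bar>y\<bar> \<le> x^2 + y^2" using abs_ge_zero[of x] abs_ge_zero[of y] mult_nonneg_nonneg[of "\<bar>x\<bar>" "\<bar>y\<bar>"] by linarith
  thus ?thesis by (simp add: abs_mult)
qed

lemma Wup:
  fixes C0 B0 eps L u w z b1 :: real
  assumes "C0 \<ge> 0" "B0 \<ge> 0" "eps \<ge> 0" "L \<ge> 0"
  shows "C0*u^2 + B0*w^2 + eps*(u*w) + L*(z^2+b1^2) \<le> (C0+B0+eps+L)*(z^2+b1^2+u^2+w^2)"
proof -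
  have "eps*(u*w) \<le> eps*\<bar>u*w\<bar>" using assms(3) by (intro mult_left_mono) auto
  also have "\<dots> \<le> eps*(u^2+w^2)" using mult_left_mono[OF absprod2[of u w] assms(3)] .
  finally have "eps*(u*w) \<le> eps*(u^2+w^2)" .
  moreover have "C0*u^2 \<le> C0*(z^2+b1^2+u^2+w^2)" using assms(1) by (intro mult_left_mono) auto
  moreover have "B0*w^2 \<le> B0*(z^2+b1^2+u^2+w^2)" using assms(2) by (intro mult_left_mono) auto
  moreover have "eps*(u^2+w^2) \<le> eps*(z^2+b1^2+u^2+w^2)" using assms(3) by (intro mult_left_mono) auto
  moreover have "L*(z^2+b1^2) \<le> L*(z^2+b1^2+u^2+w^2)" using assms(4) by (intro mult_left_mono) auto
  ultimately show ?thesis by (simp add: algebra_simps)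
qed

lemma Wlow:
  fixes C0 B0 eps L k0 u w z b1 :: real
  assumes "C0 > 0" "B0 > 0" "eps > 0" "L > 0" "k0 > 0" "eps*k0 \<le> C0" "2*eps \<le> B0*k0"
  shows "min (min (C0/2) (B0/2)) L * (z^2+b1^2+u^2+w^2) \<le> C0*u^2 + B0*w^2 + eps*(u*w) + L*(z^2+b1^2)"
proof -
  define mm where "mm = min (min (C0/2) (B0/2)) L"
  have mm: "mm \<le> C0/2" "mm \<le> B0/2" "mm \<le> L" unfolding mm_def by auto
  have "-(u*w) \<le> (k0/2)*u^2 + w^2/(2*k0)"
  proof -
    have "0 \<le> (k0*u + w)^2" by simp
    hence "-(2*k0*(u*w)) \<le> k0^2*u^2 + w^2" by (simp add: power2_eq_square algebra_simps)
    hence "-(2*k0*(u*w))/(2*k0) \<le> (k0^2*u^2 + w^2)/(2*k0)" using assms(5) by (intro divide_right_mono) auto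
    thus ?thesis using assms(5) by (simp add: field_simps power2_eq_square)
  qed
  hence "-(eps*(u*w)) \<le> eps*((k0/2)*u^2 + w^2/(2*k0))" using assms(3)
    by (metis minus_mult_right mult_left_mono less_imp_le)
  also have "\<dots> = (eps*k0)/2*u^2 + (2*eps)/(4*k0)*w^2" using assms(5) by (simp add: field_simps)
  also have "\<dots> \<le> C0/2*u^2 + (B0*k0)/(4*k0)*w^2"
  proof -
    have "(eps*k0)/2*u^2 \<le> C0/2*u^2" using assms(6) by (intro mult_right_mono) auto
    moreover have "(2*eps)/(4*k0)*w^2 \<le> (B0*k0)/(4*k0)*w^2" using assms(7,5) by (intro mult_right_mono divide_right_mono) auto
    ultimately show ?thesis by linarith
  qed
  also have "\<dots> = C0/2*u^2 + B0/4*w^2" using assms(5) by simp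
  finally have uw: "-(eps*(u*w)) \<le> C0/2*u^2 + B0/4*w^2" .
  have "mm*(z^2+b1^2+u^2+w^2) = mm*(z^2+b1^2) + mm*u^2 + mm*w^2" by (simp add: algebra_simps)
  also have "\<dots> \<le> L*(z^2+b1^2) + C0/2*u^2 + B0/2*w^2"
    using mm by (intro add_mono mult_right_mono) auto
  also have "\<dots> \<le> C0*u^2 + B0*w^2 + eps*(u*w) + L*(z^2+b1^2)"
  proof -
    have "0 \<le> B0*w^2" using assms(2) by simp
    thus ?thesis using uw by linarith
  qed
  finally show ?thesis unfolding mm_def .
qed

lemma sq3: fixes a b c :: real shows "(a+b+c)^2 \<le> 3*(a^2+b^2+c^2)"
proof -
  have "0 \<le> (a-b)^2 + (a-c)^2 + (b-c)^2" by simp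
  thus ?thesis by (simp add: power2_eq_square algebra_simps)
qed

lemma norm_rel:
  fixes ds b1 u w z :: real
  assumes "z = ds + b1 + u"
  shows "ds^2+b1^2+u^2+w^2 \<le> 4*(z^2+b1^2+u^2+w^2)" "z^2+b1^2+u^2+w^2 \<le> 4*(ds^2+b1^2+u^2+w^2)"
proof -
  have "ds = z + (-b1) + (-u)" using assms by simp
  hence "ds^2 \<le> 3*(z^2+b1^2+u^2)" using sq3[of z "-b1" "-u"] by simp
  thus "ds^2+b1^2+u^2+w^2 \<le> 4*(z^2+b1^2+u^2+w^2)" using zero_le_power2[of z] zero_le_power2[of w] zero_le_power2[of b1] zero_le_power2[of u] by (smt (verit))
  have "z^2 \<le> 3*(ds^2+b1^2+u^2)" using assms sq3[of ds b1 u] by simp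
  thus "z^2+b1^2+u^2+w^2 \<le> 4*(ds^2+b1^2+u^2+w^2)" using zero_le_power2[of ds] zero_le_power2[of w] zero_le_power2[of b1] zero_le_power2[of u] by (smt (verit))
qed



theorem proposition3:
  fixes mu1 mu2 mu1' mu2' :: "real \<Rightarrow> real"
    and s_in sbar Dmin Dmax G1 G2 :: real
  assumes s_in_pos: "s_in > 0"
    and mu1_deriv: "\<And>s. s \<in> {0..s_in} \<Longrightarrow> (mu1 has_real_derivative mu1' s) (at s within {0..s_in})"
    and mu2_deriv: "\<And>s. s \<in> {0..s_in} \<Longrightarrow> (mu2 has_real_derivative mu2' s) (at s within {0..s_in})"
    and mu1'_cont: "continuous_on {0..s_in} mu1'"
    and mu2'_cont: "continuous_on {0..s_in} mu2'"
    and mu1_nonneg: "\<And>s. s \<in> {0..s_in} \<Longrightarrow> mu1 s \<ge> 0"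
    and mu2_nonneg: "\<And>s. s \<in> {0..s_in} \<Longrightarrow> mu2 s \<ge> 0"
    and sbar: "0 < sbar" "sbar < s_in"
    and mu_less: "mu1 sbar < mu2 sbar"
    and Dmin: "0 < Dmin" "Dmin < mu2 sbar"
    and Dmax: "mu2 sbar < Dmax"
    and G1: "G1 > 0" and G2: "G2 > 0"
    and G1_gain: "G1 > - mu2' sbar"
  shows "chemostat_cl mu1 mu2 s_in sbar Dmin Dmax G1 G2 (sbar, 0, s_in - sbar, mu2 sbar) = 0
    \<and> locally_exp_stable (chemostat_cl mu1 mu2 s_in sbar Dmin Dmax G1 G2) (sbar, 0, s_in - sbar, mu2 sbar)
    \<and> (\<exists>\<delta>>0. \<forall>x. ode_solution (chemostat_cl mu1 mu2 s_in sbar Dmin Dmax G1 G2) x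
            \<and> norm (x 0 - (sbar, 0, s_in - sbar, mu2 sbar)) < \<delta> \<longrightarrow>
          ((\<lambda>t. snd (snd (snd (x t)))) \<longlongrightarrow> mu2 sbar) at_top)"
proof -
  define f where "f = chemostat_cl mu1 mu2 s_in sbar Dmin Dmax G1 G2"
  define D0 where "D0 = mu2 sbar"
  define B0 where "B0 = s_in - sbar"
  define xe :: state where "xe = (sbar, 0, B0, D0)"
  define k0 where "k0 = mu2' sbar + G1"
  define c0 where "c0 = (D0 - Dmin) * (Dmax - D0)"
  define C0 where "C0 = G2 * c0"
  define a where "a = (D0 - mu1 sbar)/2"
  define d where "d = min Dmin a"
  define kap where "kap = \<bar>Dmax + Dmin - 2*D0\<bar> + 1"
  define eps where "eps = min (B0*k0/2) (C0/k0)"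
  define q0 where "q0 = min (C0*B0*k0) (eps*B0/2)"
  define L where "L = (4*((2*C0*B0*k0 - eps*C0)^2 + (eps*B0*k0 - 2*B0*C0)^2)/q0 + 2)/(2*d)"
  define Tt where "Tt = min (q0/32) (1/3)"
  define A1 where "A1 = 2*C0*B0 + eps*B0"
  define A2 where "A2 = (k0+2)*(2*C0+eps) + 2*B0*G2*kap + eps*G2*kap"
  define eta where "eta = min 1 (Tt/(2*A1))"
  define mg where "mg = min (D0 - Dmin) (Dmax - D0)"
  define Wm where "Wm = C0 + B0 + eps + L"
  define wmin where "wmin = min (min (C0/2) (B0/2)) L"
  define r1 where "r1 = min (q0/2) 1 / Wm"
  have B0: "B0 > 0" unfolding B0_def using sbar by simp
  have k0: "k0 > 0" unfolding k0_def using G1_gain by simp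
  have c0: "c0 > 0" unfolding c0_def D0_def using Dmin Dmax by simp
  have C0: "C0 > 0" unfolding C0_def using G2 c0 by simp
  have a: "a > 0" unfolding a_def D0_def using mu_less by simp
  have d: "d > 0" "d \<le> Dmin" "d \<le> a" unfolding d_def using a Dmin by auto
  have kap: "kap \<ge> 1" unfolding kap_def by simp
  have eps: "eps > 0" unfolding eps_def using B0 k0 C0 by simp
  have eps1: "eps*k0 \<le> C0"
  proof -
    have "eps \<le> C0/k0" unfolding eps_def by simp
    thus ?thesis using k0 by (simp add: field_simps)
  qed
  have eps2: "2*eps \<le> B0*k0"
  proof -
    have "eps \<le> B0*k0/2" unfolding eps_def by linarith
    thus ?thesis by simp
  qed
  have q0: "q0 > 0" unfolding q0_def using C0 B0 k0 eps by simp
  have L: "L > 0" unfolding L_def using q0 d by (intro divide_pos_pos add_nonneg_pos) auto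
  have L2: "2*L*d = 4*((2*C0*B0*k0 - eps*C0)^2 + (eps*B0*k0 - 2*B0*C0)^2)/q0 + 2"
    unfolding L_def using d by simp
  have Tt: "Tt > 0" unfolding Tt_def using q0 by simp
  have A1: "A1 > 0" unfolding A1_def using C0 B0 eps by (intro add_pos_pos) auto
  have A2: "A2 > 0" unfolding A2_def using C0 B0 eps k0 kap G2 by (intro add_pos_pos add_nonneg_nonneg) auto
  have eta: "eta > 0" "eta \<le> 1" "eta*A1 \<le> Tt/2"
  proof -
    show "eta > 0" "eta \<le> 1" unfolding eta_def using Tt A1 by auto
    have "eta \<le> Tt/(2*A1)" unfolding eta_def by simp
    thus "eta*A1 \<le> Tt/2" using A1 by (simp add: field_simps)
  qed
  have mg: "mg > 0" unfolding mg_def D0_def using Dmin Dmax by simp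
  have Wm: "Wm > 0" unfolding Wm_def using C0 B0 eps L by simp
  have wmin: "wmin > 0" unfolding wmin_def using C0 B0 L by simp
  have r1: "r1 > 0" unfolding r1_def using q0 Wm by simp
  have int: "at sbar within {0..s_in} = at sbar" by (rule at_within_interior) (use sbar in simp)
  have mu1d: "(mu1 has_real_derivative mu1' sbar) (at sbar)" using mu1_deriv[of sbar] sbar int by simp
  have mu2d: "(mu2 has_real_derivative mu2' sbar) (at sbar)" using mu2_deriv[of sbar] sbar int by simp
  obtain de1 where de1: "de1 > 0" "\<And>y. \<bar>y - sbar\<bar> < de1 \<Longrightarrow> \<bar>mu1 y - mu1 sbar - mu1' sbar*(y - sbar)\<bar> \<le> 1*\<bar>y - sbar\<bar>"
    using deriv_approx[OF mu1d, of 1] by auto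
  obtain de2 where de2: "de2 > 0" "\<And>y. \<bar>y - sbar\<bar> < de2 \<Longrightarrow> \<bar>mu2 y - mu2 sbar - mu2' sbar*(y - sbar)\<bar> \<le> eta*\<bar>y - sbar\<bar>"
    using deriv_approx[OF mu2d eta(1)] by auto
  define rho where "rho = min (min (min 1 de1) (min de2 (mg/(1+G1)))) (min (a/(\<bar>mu1' sbar\<bar>+2+G1)) (Tt/(2*A2)))"
  have rho: "rho > 0" unfolding rho_def using de1 de2 mg G1 a Tt A2 by simp
  have rho_le: "rho \<le> 1" "rho \<le> de1" "rho \<le> de2" "(1+G1)*rho \<le> mg" "(\<bar>mu1' sbar\<bar>+2+G1)*rho \<le> a" "rho*A2 \<le> Tt/2"
  proof -
    show "rho \<le> 1" "rho \<le> de1" "rho \<le> de2" unfolding rho_def by auto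
    have "rho \<le> mg/(1+G1)" unfolding rho_def by auto
    thus "(1+G1)*rho \<le> mg" using G1 by (simp add: field_simps)
    have "rho \<le> a/(\<bar>mu1' sbar\<bar>+2+G1)" unfolding rho_def by auto
    thus "(\<bar>mu1' sbar\<bar>+2+G1)*rho \<le> a" using G1 by (simp add: field_simps)
    have "rho \<le> Tt/(2*A2)" unfolding rho_def by auto
    thus "rho*A2 \<le> Tt/2" using A2 by (simp add: field_simps)
  qed
  have Lam1: "eta*(2*C0*B0 + eps*B0) + rho*((k0+2)*(2*C0+eps) + 2*B0*G2*kap + eps*G2*kap) \<le> q0/32"
    and Lam2: "eta*(2*C0*B0 + eps*B0) + rho*((k0+2)*(2*C0+eps) + 2*B0*G2*kap + eps*G2*kap) \<le> 1/3"
    using eta(3) rho_le(6) unfolding A1_def[symmetric] A2_def[symmetric] Tt_def by auto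
  define W :: "state \<Rightarrow> real" where "W = (\<lambda>y. C0*(fst(snd(snd y)) - B0)^2 + B0*(snd(snd(snd y)) - D0)^2
      + eps*((fst(snd(snd y)) - B0)*(snd(snd(snd y)) - D0))
      + L*((fst y + fst(snd y) + fst(snd(snd y)) - s_in)^2 + (fst(snd y))^2))"
  define DW :: "state \<Rightarrow> state \<Rightarrow> real" where "DW = (\<lambda>y h. 2*C0*(fst(snd(snd y)) - B0)*fst(snd(snd h)) + 2*B0*(snd(snd(snd y)) - D0)* snd(snd(snd h))
      + eps*(fst(snd(snd h))*(snd(snd(snd y)) - D0) + (fst(snd(snd y)) - B0)* snd(snd(snd h)))
      + L*(2*(fst y + fst(snd y) + fst(snd(snd y)) - s_in)*(fst h + fst(snd h) + fst(snd(snd h))) + 2*fst(snd y)*fst(snd h)))"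
  have Wd: "\<And>y. (W has_derivative DW y) (at y)"
    unfolding W_def DW_def by (rule W_deriv)
  have Wcomp: "W (s,b1,b2,Dh) = C0*(b2-B0)^2 + B0*(Dh-D0)^2 + eps*((b2-B0)*(Dh-D0)) + L*((s+b1+b2-s_in)^2 + b1^2)"
    for s b1 b2 Dh unfolding W_def by simp
  have ye: "(s,b1,b2,Dh) - xe = (s - sbar, b1, b2 - B0, Dh - D0)" for s b1 b2 Dh
    unfolding xe_def by simp
  have zrel: "s+b1+b2-s_in = (s - sbar) + b1 + (b2 - B0)" for s b1 b2 :: real unfolding B0_def by simp
  have Whi: "W y \<le> (4*Wm)*(norm(y-xe))^2" for y
  proof -
    obtain s b1 b2 Dh where y: "y = (s,b1,b2,Dh)" by (cases y) auto
    have "W y \<le> Wm*((s+b1+b2-s_in)^2 + b1^2 + (b2-B0)^2 + (Dh-D0)^2)"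
      unfolding y Wcomp Wm_def by (rule Wup) (use C0 B0 eps L in auto)
    also have "\<dots> \<le> Wm*(4*((s-sbar)^2 + b1^2 + (b2-B0)^2 + (Dh-D0)^2))"
      using norm_rel(2)[OF zrel[of s b1 b2], of "Dh-D0"] Wm by (intro mult_left_mono) auto
    also have "\<dots> = (4*Wm)*(norm(y-xe))^2" unfolding y ye norm4_sq by simp
    finally show ?thesis .
  qed
  have Wlo: "(wmin/4)*(norm(y-xe))^2 \<le> W y" for y
  proof -
    obtain s b1 b2 Dh where y: "y = (s,b1,b2,Dh)" by (cases y) auto
    have "(wmin/4)*(norm(y-xe))^2 = (wmin/4)*((s-sbar)^2 + b1^2 + (b2-B0)^2 + (Dh-D0)^2)"
      unfolding y ye norm4_sq by simp
    also have "\<dots> \<le> (wmin/4)*(4*((s+b1+b2-s_in)^2 + b1^2 + (b2-B0)^2 + (Dh-D0)^2))"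
      using norm_rel(1)[OF zrel[of s b1 b2], of "Dh-D0"] wmin by (intro mult_left_mono) auto
    also have "\<dots> = wmin*((s+b1+b2-s_in)^2 + b1^2 + (b2-B0)^2 + (Dh-D0)^2)" by simp
    also have "\<dots> \<le> W y"
      unfolding y Wcomp wmin_def by (rule Wlow[OF C0 B0 eps L k0 eps1 eps2])
    finally show ?thesis .
  qed
  have dec: "DW y (f y) \<le> -r1 * W y" if ny: "norm(y-xe) < rho" for y
  proof -
    obtain s b1 b2 Dh where y: "y = (s,b1,b2,Dh)" by (cases y) auto
    define ds where "ds = s - sbar"
    define u where "u = b2 - B0"
    define w where "w = Dh - D0"
    define z where "z = s+b1+b2-s_in"
    have n: "norm ((ds,b1,u,w)::state) < rho" using ny unfolding y ye ds_def u_def w_def .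
    have bds: "\<bar>ds\<bar> < rho" "\<bar>b1\<bar> < rho" "\<bar>u\<bar> < rho" "\<bar>w\<bar> < rho"
      using le_less_trans[OF norm4_comp(1) n] le_less_trans[OF norm4_comp(2) n] le_less_trans[OF norm4_comp(3) n] le_less_trans[OF norm4_comp(4) n] by auto
    define Dv where "Dv = D0 + w - G1*ds"
    have wG: "\<bar>w - G1*ds\<bar> < mg"
    proof -
      have "\<bar>w - G1*ds\<bar> \<le> \<bar>w\<bar> + G1*\<bar>ds\<bar>" 
      proof -
        have "\<bar>G1*ds\<bar> = G1*\<bar>ds\<bar>" using G1 by (simp add: abs_mult)
        thus ?thesis using abs_triangle_ineq4[of w "G1*ds"] by linarith
      qed
      also have "\<dots> < rho + G1*rho" using bds G1 by (intro add_less_le_mono mult_left_mono) auto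
      also have "\<dots> \<le> mg" using rho_le(4) by (simp add: algebra_simps)
      finally show ?thesis .
    qed
    have Dvb: "Dmin < Dv" "Dv < Dmax" unfolding Dv_def using wG unfolding mg_def by auto
    have sat: "sat Dmin Dmax (Dh - G1*(s - sbar)) = Dv"
    proof -
      have "Dh - G1*(s - sbar) = Dv" unfolding Dv_def w_def ds_def by simp
      thus ?thesis unfolding sat_def using Dvb by simp
    qed
    have fy: "f y = (- mu1 s * b1 - mu2 s * b2 + Dv * (s_in - s), mu1 s * b1 - Dv * b1,
        mu2 s * b2 - Dv * b2, - G2 * (s - sbar) * (Dh - Dmin) * (Dmax - Dh))"
      unfolding f_def y chemostat_cl_def Let_def by (simp add: sat)
    define Rr where "Rr = mu2 s - D0 - mu2' sbar*ds"
    define dc where "dc = (Dh - Dmin)*(Dmax - Dh) - c0"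
    have R: "\<bar>Rr\<bar> \<le> eta*\<bar>ds\<bar>" unfolding Rr_def D0_def ds_def
      using de2(2)[of s] bds(1) rho_le(3) unfolding ds_def by simp
    have dcb: "\<bar>dc\<bar> \<le> kap*rho"
    proof -
      have "dc = w*(Dmax + Dmin - 2*D0 - w)" unfolding dc_def c0_def w_def by (simp add: algebra_simps)
      hence "\<bar>dc\<bar> = \<bar>w\<bar>*\<bar>Dmax + Dmin - 2*D0 - w\<bar>" by (simp add: abs_mult)
      also have "\<dots> \<le> rho*kap"
      proof (rule mult_mono)
        show "\<bar>w\<bar> \<le> rho" using bds by simp
        have "\<bar>Dmax + Dmin - 2*D0 - w\<bar> \<le> \<bar>Dmax + Dmin - 2*D0\<bar> + \<bar>w\<bar>" by (rule abs_triangle_ineq4)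
        thus "\<bar>Dmax + Dmin - 2*D0 - w\<bar> \<le> kap" unfolding kap_def using bds rho_le(1) by linarith
      qed (use rho in auto)
      finally show ?thesis by (simp add: mult.commute)
    qed
    have m1: "mu1 s - Dv \<le> -d"
    proof -
      have "\<bar>mu1 s - mu1 sbar - mu1' sbar*ds\<bar> \<le> \<bar>ds\<bar>"
        using de1(2)[of s] bds(1) rho_le(2) unfolding ds_def by simp
      moreover have "\<bar>mu1' sbar*ds\<bar> \<le> \<bar>mu1' sbar\<bar>*rho" unfolding abs_mult using bds(1) by (intro mult_left_mono) auto
      ultimately have "mu1 s \<le> mu1 sbar + (\<bar>mu1' sbar\<bar>+1)*rho" using bds(1) by (simp add: algebra_simps)
      moreover have "\<bar>G1*ds\<bar> \<le> G1*rho" unfolding abs_mult using bds(1) G1 by (simp add: mult_left_mono)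
      ultimately have "mu1 s - Dv \<le> mu1 sbar - D0 + (\<bar>mu1' sbar\<bar>+2+G1)*rho"
        unfolding Dv_def using bds(4) by (simp add: algebra_simps)
      also have "\<dots> \<le> -2*a + a" using rho_le(5) unfolding a_def by (simp add: field_simps)
      finally show ?thesis using d by simp
    qed
    have core_app: "2*C0*u*(mu2 s * b2 - Dv * b2) + 2*B0*w*(- G2 * (s - sbar) * (Dh - Dmin) * (Dmax - Dh))
       + eps*((mu2 s * b2 - Dv * b2)*w + u*(- G2 * (s - sbar) * (Dh - Dmin) * (Dmax - Dh)))
       + L*(2*z*((- mu1 s * b1 - mu2 s * b2 + Dv * (s_in - s)) + (mu1 s * b1 - Dv * b1) + (mu2 s * b2 - Dv * b2))
            + 2*b1*(mu1 s * b1 - Dv * b1))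
       \<le> -(q0/2)*(u^2+w^2) - (z^2+b1^2)"
    proof (rule core[OF C0 B0 k0 G2 eps less_imp_le[OF eta(1)] _ d(1) eps1 eps2 q0_def L2 _ R dcb _ _ _ eta(2) Lam1 Lam2])
      show "0 \<le> kap" using kap by simp
      show "z = ds + b1 + u" unfolding z_def ds_def u_def B0_def by simp
      show "\<bar>ds\<bar> \<le> rho" "\<bar>u\<bar> \<le> rho" "\<bar>w\<bar> \<le> rho" using bds by auto
      show "d \<le> Dv" using d Dvb by simp
      show "mu1 s - Dv \<le> -d" by (rule m1)
      show "mu2 s * b2 - Dv * b2 = (k0*ds + Rr - w)*(B0+u)"
        unfolding k0_def Rr_def Dv_def u_def by (simp add: algebra_simps)
      show "- G2 * (s - sbar) * (Dh - Dmin) * (Dmax - Dh) = -(C0 + G2*dc)*ds"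
        unfolding C0_def dc_def ds_def by (simp add: algebra_simps)
      show "(- mu1 s * b1 - mu2 s * b2 + Dv * (s_in - s)) + (mu1 s * b1 - Dv * b1) + (mu2 s * b2 - Dv * b2) = -Dv*z"
        unfolding z_def by (simp add: algebra_simps)
      show "mu1 s * b1 - Dv * b1 = (mu1 s - Dv)*b1" by (simp add: algebra_simps)
    qed
    have "DW y (f y) = 2*C0*u*(mu2 s * b2 - Dv * b2) + 2*B0*w*(- G2 * (s - sbar) * (Dh - Dmin) * (Dmax - Dh))
       + eps*((mu2 s * b2 - Dv * b2)*w + u*(- G2 * (s - sbar) * (Dh - Dmin) * (Dmax - Dh)))
       + L*(2*z*((- mu1 s * b1 - mu2 s * b2 + Dv * (s_in - s)) + (mu1 s * b1 - Dv * b1) + (mu2 s * b2 - Dv * b2))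
            + 2*b1*(mu1 s * b1 - Dv * b1))"
      unfolding DW_def fy by (simp add: y u_def w_def z_def)
    hence dw: "DW y (f y) \<le> -(q0/2)*(u^2+w^2) - (z^2+b1^2)" using core_app by simp
    have Wy: "W y \<le> Wm*(z^2+b1^2+u^2+w^2)"
      unfolding y Wcomp Wm_def u_def[symmetric] w_def[symmetric] z_def[symmetric] by (rule Wup) (use C0 B0 eps L in auto)
    have "-(q0/2)*(u^2+w^2) - (z^2+b1^2) \<le> -(min (q0/2) 1)*(z^2+b1^2+u^2+w^2)"
    proof -
      have "min (q0/2) 1*(u^2+w^2) \<le> (q0/2)*(u^2+w^2)" by (intro mult_right_mono) auto
      moreover have "min (q0/2) 1*(z^2+b1^2) \<le> 1*(z^2+b1^2)" by (intro mult_right_mono) auto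
      ultimately show ?thesis by (simp add: algebra_simps)
    qed
    also have "\<dots> = -r1*(Wm*(z^2+b1^2+u^2+w^2))" unfolding r1_def using Wm by simp
    also have "\<dots> \<le> -r1 * W y" using Wy r1 by simp
    finally show ?thesis using dw by simp
  qed
  obtain de where de: "de > 0" "\<And>x. ode_solution f x \<Longrightarrow> norm (x 0 - xe) < de \<Longrightarrow>
      (\<forall>t\<ge>0. norm (x t - xe) \<le> sqrt((4*Wm)/(wmin/4)) * exp(-(r1/2)*t) * norm (x 0 - xe))"
    using lyap_exp[of W DW "wmin/4" xe "4*Wm" rho f r1, OF Wd Wlo Whi _ _ dec r1 rho] wmin Wm by auto
  have eq: "f xe = 0"
  proof -
    have "sat Dmin Dmax (D0 - G1*(sbar - sbar)) = D0" unfolding sat_def D0_def using Dmin Dmax by simp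
    thus ?thesis unfolding f_def xe_def chemostat_cl_def Let_def B0_def by (simp add: D0_def zero_prod_def algebra_simps)
  qed
  have les: "locally_exp_stable f xe"
  proof -
    define K0 where "K0 = sqrt((4*Wm)/(wmin/4))"
    define r where "r = r1/2"
    have K0: "K0 > 0" unfolding K0_def using Wm wmin by simp
    have r: "r > 0" unfolding r_def using r1 by simp
    have "\<forall>x. ode_solution f x \<and> norm (x 0 - xe) < de \<longrightarrow>
        (\<forall>t\<ge>0. norm (x t - xe) \<le> K0 * exp (- r * t) * norm (x 0 - xe))"
      using de(2) unfolding K0_def r_def by auto
    thus ?thesis unfolding locally_exp_stable_def using de(1) K0 r by blast
  qed
  have lim: "\<exists>\<delta>>0. \<forall>x. ode_solution f x \<and> norm (x 0 - xe) < \<delta> \<longrightarrow>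
          ((\<lambda>t. snd (snd (snd (x t)))) \<longlongrightarrow> D0) at_top"
  proof (intro exI[of _ de] conjI allI impI)
    show "de > 0" by fact
    fix x assume asm: "ode_solution f x \<and> norm (x 0 - xe) < de"
    define K where "K = sqrt((4*Wm)/(wmin/4)) * norm (x 0 - xe)"
    have bnd: "\<bar>snd (snd (snd (x t))) - D0\<bar> \<le> K * exp(-(r1/2)*t)" if "t \<ge> 0" for t
    proof -
      obtain s b1 b2 Dh where xt: "x t = (s,b1,b2,Dh)" by (cases "x t") auto
      have "\<bar>snd (snd (snd (x t))) - D0\<bar> \<le> norm (x t - xe)"
        unfolding xt ye using norm4_comp(4) by simp
      also have "\<dots> \<le> K * exp(-(r1/2)*t)" using de(2)[of x] asm that unfolding K_def by (auto simp: algebra_simps)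
      finally show ?thesis .
    qed
    have e0: "((\<lambda>t. exp(-(r1/2)*t)) \<longlongrightarrow> 0) at_top"
    proof -
      have "filterlim (\<lambda>t. (r1/2)*t) at_top at_top"
        by (rule filterlim_tendsto_pos_mult_at_top[OF tendsto_const _ filterlim_ident]) (use r1 in simp)
      hence "filterlim (\<lambda>t. -((r1/2)*t)) at_bot at_top" by (simp add: filterlim_uminus_at_bot)
      thus ?thesis by (intro filterlim_compose[OF exp_at_bot]) simp
    qed
    have "((\<lambda>t. snd (snd (snd (x t))) - D0) \<longlongrightarrow> 0) at_top"
    proof (rule Lim_null_comparison)
      show "eventually (\<lambda>t. norm (snd (snd (snd (x t))) - D0) \<le> K * exp(-(r1/2)*t)) at_top"
        using eventually_ge_at_top[of "0::real"] by eventually_elim (use bnd in auto)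
      show "((\<lambda>t. K * exp(-(r1/2)*t)) \<longlongrightarrow> 0) at_top"
        using tendsto_mult[OF tendsto_const e0, of K] by simp
    qed
    thus "((\<lambda>t. snd (snd (snd (x t)))) \<longlongrightarrow> D0) at_top"
      by (rule LIM_zero_cancel)
  qed
  show ?thesis using eq les lim unfolding f_def xe_def D0_def B0_def by auto
qed


end
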